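(* Let $d=1$ and $\lambda>0$. Let $\mathcal{E}$ be a Poisson point process on $\mathbb{R}$ with intensity $\lambda\,\mathrm{Leb}_1$ and, conditionally on $\mathcal{E}$, let $\{(B^x_s)_{s\ge 0}: x\in\mathcal{E}\}$ be independent one-dimensional Brownian motions with $B^x_0=x$ (with $(B^x_s-x)_{s\geq 0}$ independent of $\mathcal{E}$). For $t\ge 0$ let $\mathcal{O}_t=\bigcup_{x\in\mathcal{E}}\{B^x_s: 0\le s\le t\}$. Then for every $t\ge 0$, almost surely $\mathcal{O}_t$ has no unbounded cluster.
   Context: Two points are connected in a set $A$ if there is a continuous path $\gamma:[0,1]\to A$ joining them; a cluster of $A$ is a maximal connected subset of $A$; a cluster is bounded if it is contained in some ball $\{y:\|y\|<R\}$, and unbounded otherwise. *)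

theory Defs
  imports "HOL-Probability.Probability"
begin

text \<open>Poisson point process on a measurable space S with intensity measure mu,
  realised on the probability space M as a random (locally finite) set of points
  Phi :: 'w => 's set.\<close>
definition poisson_point_process ::
  "'w measure \<Rightarrow> 's measure \<Rightarrow> 's measure \<Rightarrow> ('w \<Rightarrow> 's set) \<Rightarrow> bool" where
  "poisson_point_process M S \<mu> \<Phi> \<longleftrightarrow>
     prob_space M \<and> sets \<mu> = sets S \<and>
     (\<forall>A\<in>sets S. emeasure \<mu> A < \<infinity> \<longrightarrow>
        (AE \<omega> in M. finite (\<Phi> \<omega> \<inter> A)) \<and>
        (\<lambda>\<omega>. card (\<Phi> \<omega> \<inter> A)) \<in> measurable M (count_space UNIV) \<and>
        (\<forall>k::nat. measure M {\<omega>\<in>space M. card (\<Phi> \<omega> \<inter> A) = k}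
                   = measure \<mu> A ^ k / fact k * exp (- measure \<mu> A))) \<and>
     (\<forall>(I::nat set) A. finite I \<longrightarrow> A ` I \<subseteq> sets S \<longrightarrow>
        (\<forall>i\<in>I. emeasure \<mu> (A i) < \<infinity>) \<longrightarrow> disjoint_family_on A I \<longrightarrow>
        prob_space.indep_vars M (\<lambda>_. count_space UNIV)
          (\<lambda>i \<omega>. card (\<Phi> \<omega> \<inter> A i)) I)"

text \<open>Law of a one-dimensional standard Brownian motion started at 0 (Wiener measure),
  as a probability measure on the product sigma-algebra of real => real:
  w 0 = 0 a.s. and increments over consecutive intervals of [0, oo) are
  independent centred Gaussians with variance equal to the interval length.
  (Path continuity is not measurable here and is imposed separately.)\<close>
definition brownian_law :: "(real \<Rightarrow> real) measure \<Rightarrow> bool" where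
  "brownian_law W \<longleftrightarrow>
     prob_space W \<and> sets W = sets (PiM UNIV (\<lambda>_::real. borel)) \<and>
     (AE w in W. w 0 = 0) \<and>
     (\<forall>(n::nat) (t::nat \<Rightarrow> real). 0 \<le> t 0 \<and> (\<forall>i<n. t i < t (Suc i)) \<longrightarrow>
        prob_space.indep_vars W (\<lambda>_. borel) (\<lambda>i w. w (t (Suc i)) - w (t i)) {..<n} \<and>
        (\<forall>i<n. distributed W lborel (\<lambda>w. w (t (Suc i)) - w (t i))
                  (\<lambda>x. ennreal (normal_density 0 (sqrt (t (Suc i) - t i)) x))))"

text \<open>The occupied set O_t: union of the ranges up to time t of the paths
  B^x_s = x + w s, over all marked points (x, w).\<close>
definition occupied :: "(real \<times> (real \<Rightarrow> real)) set \<Rightarrow> real \<Rightarrow> real set" where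
  "occupied P t = (\<Union>(x, w)\<in>P. (\<lambda>s. x + w s) ` {0..t})"

text \<open>A cluster of A is a path-connected component (path_component_set A y, y in A).\<close>
definition has_unbounded_cluster :: "real set \<Rightarrow> bool" where
  "has_unbounded_cluster A \<longleftrightarrow> (\<exists>y\<in>A. \<not> bounded (path_component_set A y))"

end

theory Submission
  imports Defs
begin

definition tau :: "real \<Rightarrow> nat \<Rightarrow> nat \<Rightarrow> real" where "tau T n j = real j * T / 2^n"
definition inc :: "real \<Rightarrow> nat \<Rightarrow> nat \<Rightarrow> (real \<Rightarrow> real) \<Rightarrow> real" where
  "inc T n j w = w (tau T n (Suc j)) - w (tau T n j)"
definition rr :: real where "rr = 4/5"
definition bE :: "real \<Rightarrow> nat \<Rightarrow> (real\<Rightarrow>real) \<Rightarrow> ennreal" where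
  "bE T n w = ennreal (rr^n) + (\<Sum>j<2^n. ennreal (inc T n j w ^ 4)) * ennreal (1 / rr^(3*n))"
definition rho :: "real \<Rightarrow> (real\<Rightarrow>real) \<Rightarrow> ennreal" where
  "rho T w = ennreal \<bar>w 0\<bar> + (\<Sum>n. bE T n w)"

lemma abs_le_quartic:
  fixes a x :: real assumes a: "a > 0" shows "\<bar>x\<bar> \<le> a + x^4/a^3"
proof (cases "\<bar>x\<bar> \<le> a")
  case True then show ?thesis using a by (simp add: add_increasing2)
next
  case False
  then have "a^3 \<le> \<bar>x\<bar>^3" using a by (intro power_mono) auto
  then have "\<bar>x\<bar> * a^3 \<le> \<bar>x\<bar> * \<bar>x\<bar>^3" by (intro mult_left_mono) auto
  also have "\<dots> = \<bar>x\<bar>^4" by (simp add: eval_nat_numeral)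
  also have "\<dots> = x^4" by simp
  finally have "\<bar>x\<bar> \<le> x^4/a^3" using a by (simp add: field_simps)
  then show ?thesis using a by linarith
qed

lemma rr_pos: "rr > 0" by (simp add: rr_def)

lemma inc_le_bE:
  assumes "j < 2^n" shows "ennreal \<bar>inc T n j w\<bar> \<le> bE T n w"
proof -
  have a: "rr^n > 0" using rr_pos by simp
  have "\<bar>inc T n j w\<bar> \<le> rr^n + inc T n j w ^ 4 / (rr^n)^3"
    by (rule abs_le_quartic[OF a])
  then have "ennreal \<bar>inc T n j w\<bar> \<le> ennreal (rr^n + inc T n j w ^ 4 / rr^(3*n))"
    by (intro ennreal_leI) (simp add: power_mult[symmetric] mult.commute)
  also have "\<dots> = ennreal (rr^n) + ennreal (inc T n j w ^ 4 / rr^(3*n))"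
    using a rr_pos by (intro ennreal_plus) (auto intro!: divide_nonneg_pos)
  also have "ennreal (inc T n j w ^ 4 / rr^(3*n)) = ennreal (inc T n j w ^ 4) * ennreal (1 / rr^(3*n))"
  proof -
    have "ennreal (inc T n j w ^ 4 * (1/rr^(3*n))) = ennreal (inc T n j w ^ 4) * ennreal (1/rr^(3*n))"
      using rr_pos by (intro ennreal_mult) auto
    then show ?thesis by simp
  qed
  also have "\<dots> \<le> (\<Sum>j<2^n. ennreal (inc T n j w ^ 4)) * ennreal (1 / rr^(3*n))"
    using assms by (intro mult_right_mono member_le_sum) auto
  finally show ?thesis unfolding bE_def by (simp add: add_left_mono)
qed

lemma tau_double: "tau T (Suc N) (2*m) = tau T N m"
  by (simp add: tau_def)

lemma dyadic_bound:
  "\<forall>k \<le> 2^N. ennreal \<bar>w (tau T N k)\<bar> \<le> ennreal \<bar>w 0\<bar> + (\<Sum>n<Suc N. bE T n w)"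
proof (induction N)
  case 0
  show ?case
  proof (intro allI impI)
    fix k :: nat assume "k \<le> 2^0"
    then have "k = 0 \<or> k = 1" by auto
    then show "ennreal \<bar>w (tau T 0 k)\<bar> \<le> ennreal \<bar>w 0\<bar> + (\<Sum>n<Suc 0. bE T n w)"
    proof
      assume "k = 0" then show ?thesis by (simp add: tau_def add_increasing2)
    next
      assume k: "k = 1"
      have "\<bar>w (tau T 0 1)\<bar> \<le> \<bar>w 0\<bar> + \<bar>inc T 0 0 w\<bar>"
        by (simp add: inc_def tau_def)
      then have "ennreal \<bar>w (tau T 0 1)\<bar> \<le> ennreal \<bar>w 0\<bar> + ennreal \<bar>inc T 0 0 w\<bar>"
        by (simp add: ennreal_plus[symmetric] ennreal_leI del: ennreal_plus)
      also have "\<dots> \<le> ennreal \<bar>w 0\<bar> + bE T 0 w"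
        by (intro add_left_mono inc_le_bE) auto
      finally show ?thesis using k by simp
    qed
  qed
next
  case (Suc N)
  show ?case
  proof (intro allI impI)
    fix k :: nat assume k: "k \<le> 2^Suc N"
    have S: "ennreal \<bar>w 0\<bar> + (\<Sum>n<Suc N. bE T n w) \<le> ennreal \<bar>w 0\<bar> + (\<Sum>n<Suc (Suc N). bE T n w)"
      by (intro add_left_mono sum_mono2) (auto simp del: sum.lessThan_Suc)
    show "ennreal \<bar>w (tau T (Suc N) k)\<bar> \<le> ennreal \<bar>w 0\<bar> + (\<Sum>n<Suc (Suc N). bE T n w)"
    proof (cases "even k")
      case True
      then obtain m where m: "k = 2*m" by auto
      with k have "m \<le> 2^N" by simp
      with Suc.IH have this_IH: "ennreal \<bar>w (tau T N m)\<bar> \<le> ennreal \<bar>w 0\<bar> + (\<Sum>n<Suc N. bE T n w)" by blast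
      have eq: "tau T (Suc N) k = tau T N m" by (simp add: m tau_double)
      from order_trans[OF this_IH S] show ?thesis unfolding eq .
    next
      case False
      then obtain m where m: "k = Suc (2*m)" by (metis oddE Suc_eq_plus1)
      with k have m1: "m < 2^N" by simp
      then have m2: "2*m < 2^Suc N" by simp
      with Suc.IH m1 have IH: "ennreal \<bar>w (tau T N m)\<bar> \<le> ennreal \<bar>w 0\<bar> + (\<Sum>n<Suc N. bE T n w)" by auto
      have "\<bar>w (tau T (Suc N) k)\<bar> \<le> \<bar>w (tau T N m)\<bar> + \<bar>inc T (Suc N) (2*m) w\<bar>"
        unfolding inc_def m tau_double by linarith
      then have "ennreal \<bar>w (tau T (Suc N) k)\<bar> \<le> ennreal \<bar>w (tau T N m)\<bar> + ennreal \<bar>inc T (Suc N) (2*m) w\<bar>"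
        by (simp add: ennreal_plus[symmetric] ennreal_leI del: ennreal_plus)
      also have "\<dots> \<le> (ennreal \<bar>w 0\<bar> + (\<Sum>n<Suc N. bE T n w)) + bE T (Suc N) w"
        by (intro add_mono IH inc_le_bE m2)
      also have "\<dots> = ennreal \<bar>w 0\<bar> + (\<Sum>n<Suc (Suc N). bE T n w)"
        by (simp add: add.assoc)
      finally show ?thesis .
    qed
  qed
qed

lemma dyadic_rho: "k \<le> 2^N \<Longrightarrow> ennreal \<bar>w (tau T N k)\<bar> \<le> rho T w"
proof -
  assume "k \<le> 2^N"
  then have "ennreal \<bar>w (tau T N k)\<bar> \<le> ennreal \<bar>w 0\<bar> + (\<Sum>n<Suc N. bE T n w)"
    using dyadic_bound by blast
  also have "\<dots> \<le> rho T w" unfolding rho_def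
    by (intro add_left_mono sum_le_suminf) auto
  finally show ?thesis .
qed

lemma rho_bound:
  assumes T: "T > 0" and c: "continuous_on {0..T} w" and s: "s \<in> {0..T}"
  shows "ennreal \<bar>w s\<bar> \<le> rho T w"
proof (cases "rho T w = \<top>")
  case True then show ?thesis by simp
next
  case False
  then obtain B where B: "rho T w = ennreal B" "B \<ge> 0" by (cases "rho T w") auto
  define k where "k N = nat \<lfloor>s * 2^N / T\<rfloor>" for N
  define d where "d N = tau T N (k N)" for N
  have kle: "k N \<le> 2^N" for N
  proof -
    have "s * 2^N / T \<le> 2^N" using s T by (simp add: field_simps)
    then have "\<lfloor>s * 2^N / T\<rfloor> \<le> 2^N" by (metis floor_le_numeral floor_mono floor_of_nat of_int_numeral of_nat_numeral of_nat_power floor_power le_floor_iff)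
    then show ?thesis unfolding k_def by (simp add: nat_le_iff)
  qed
  have dB: "\<bar>w (d N)\<bar> \<le> B" for N
    using dyadic_rho[OF kle[of N], of w T] B by (simp add: d_def ennreal_le_iff)
  have dd: "d N \<le> s \<and> s - T / 2^N \<le> d N \<and> 0 \<le> d N" for N
  proof -
    have s0: "s * 2^N / T \<ge> 0" using s T by simp
    have "real (k N) = of_int \<lfloor>s * 2^N / T\<rfloor>" unfolding k_def using s0 by simp
    then have k1: "real (k N) \<le> s * 2^N / T" "s * 2^N / T < real (k N) + 1"
      by linarith+
    have dN: "d N = real (k N) * T / 2^N" by (simp add: d_def tau_def)
    have a1: "real (k N) * T \<le> s * 2^N" using k1(1) T by (simp add: field_simps)
    have a2: "s * 2^N - T \<le> real (k N) * T" using k1(2) T by (simp add: field_simps)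
    have "d N \<le> s" unfolding dN using a1 by (simp add: pos_divide_le_eq)
    moreover have "s - T / 2^N \<le> d N"
    proof -
      have "(s*2^N - T)/2^N \<le> real (k N) * T / 2^N" using a2 by (intro divide_right_mono) auto
      moreover have "(s*2^N - T)/2^N = s - T/2^N" by (simp add: field_simps)
      ultimately show ?thesis unfolding dN by linarith
    qed
    moreover have "0 \<le> d N" unfolding dN using T by simp
    ultimately show ?thesis by blast
  qed
  have dlim: "d \<longlonglongrightarrow> s"
  proof (rule real_tendsto_sandwich[where f="\<lambda>N. s - T / 2^N" and h="\<lambda>N. s"])
    show "\<forall>\<^sub>F N in sequentially. s - T / 2 ^ N \<le> d N" using dd by auto
    show "\<forall>\<^sub>F N in sequentially. d N \<le> s" using dd by auto
    have "(\<lambda>N. T / 2^N) \<longlonglongrightarrow> 0"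
      by (intro LIMSEQ_divide_realpow_zero) auto
    then show "(\<lambda>N. s - T / 2 ^ N) \<longlonglongrightarrow> s" using tendsto_diff[OF tendsto_const[of s]] by force
  qed auto
  have "d N \<in> {0..T}" for N using dd[of N] s by auto
  then have ev: "\<forall>\<^sub>F N in sequentially. d N \<in> {0..T}" by simp
  have "(\<lambda>N. w (d N)) \<longlonglongrightarrow> w s"
    using continuous_on_tendsto_compose[OF c dlim s ev] .
  then have "(\<lambda>N. \<bar>w (d N)\<bar>) \<longlonglongrightarrow> \<bar>w s\<bar>" by (rule tendsto_rabs)
  then have "\<bar>w s\<bar> \<le> B" using dB by (intro LIMSEQ_le_const2) auto
  then show ?thesis using B by (simp add: ennreal_leI)
qed



lemma inc_measurable[measurable]: "(\<lambda>w. inc T n j w) \<in> borel_measurable (PiM UNIV (\<lambda>_::real. borel))"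
  unfolding inc_def by measurable

lemma bE_measurable[measurable]: "bE T n \<in> borel_measurable (PiM UNIV (\<lambda>_::real. borel))"
  unfolding bE_def by measurable

lemma rho_measurable[measurable]: "rho T \<in> borel_measurable (PiM UNIV (\<lambda>_::real. borel))"
  unfolding rho_def by measurable

lemma pc: "((x::real)^n)^k = (x^k)^n" by (metis power_mult mult.commute)
lemma aux_pow: "(2::real) ^ n * ((5 ^ n) ^ 3 * 128 ^ n) = (2 ^ n)\<^sup>2 * ((4 ^ n) ^ 3 * 125 ^ n)"
proof -
  have a: "((5::real)^n)^3 = 125^n" using pc[of 5 n 3] by simp
  have b: "((2::real)^n)^2 = 4^n" using pc[of 2 n 2] by simp
  have c: "((4::real)^n)^3 = 64^n" using pc[of 4 n 3] by simp
  have "(2::real) ^ n * ((5 ^ n) ^ 3 * 128 ^ n) = 2^n * 125^n * 128^n" by (simp add: a)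
  also have "\<dots> = (2 * 125 * 128)^n" by (simp only: power_mult_distrib)
  also have "(2 * 125 * 128 :: real) = 4 * 64 * 125" by simp
  also have "(4 * 64 * 125 :: real)^n = 4^n * 64^n * 125^n" by (simp only: power_mult_distrib)
  also have "\<dots> = (2 ^ n)\<^sup>2 * ((4 ^ n) ^ 3 * 125 ^ n)" by (simp add: b c)
  finally show ?thesis .
qed

lemma tau_less: "T > 0 \<Longrightarrow> tau T n j < tau T n (Suc j)"
  by (simp add: tau_def field_simps)

lemma inc4:
  assumes BL: "brownian_law W" and T: "T > 0"
  shows "(\<integral>\<^sup>+ w. ennreal (inc T n j w ^ 4) \<partial>W) = ennreal (3 * (T/2^n)^2)"
proof -
  define h where "h = T / 2^n"
  have h: "h > 0" using T by (simp add: h_def)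
  have hd: "tau T n (Suc j) - tau T n j = h" by (simp add: tau_def h_def field_simps)
  define tt where "tt i = tau T n (j + i)" for i
  have "0 \<le> tt 0 \<and> (\<forall>i<1. tt i < tt (Suc i))"
    using T tau_less[OF T, of n j] by (auto simp: tt_def tau_def)
  with BL have D: "distributed W lborel (\<lambda>w. w (tt (Suc 0)) - w (tt 0))
                  (\<lambda>x. ennreal (normal_density 0 (sqrt (tt (Suc 0) - tt 0)) x))"
    unfolding brownian_law_def by blast
  have D': "distributed W lborel (\<lambda>w. inc T n j w) (\<lambda>x. ennreal (normal_density 0 (sqrt h) x))"
    using D by (simp add: tt_def inc_def hd[symmetric])
  have sq: "sqrt h > 0" using h by simp
  have "(\<integral>\<^sup>+ w. ennreal (inc T n j w ^ 4) \<partial>W)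
      = (\<integral>\<^sup>+ x. ennreal (normal_density 0 (sqrt h) x) * ennreal (x^4) \<partial>lborel)"
    by (rule distributed_nn_integral[OF D', symmetric]) measurable
  also have "\<dots> = (\<integral>\<^sup>+ x. ennreal (normal_density 0 (sqrt h) x * (x - 0)^(2*2)) \<partial>lborel)"
    by (intro nn_integral_cong) (simp add: ennreal_mult)
  also have "\<dots> = ennreal (integral\<^sup>L lborel (\<lambda>x. normal_density 0 (sqrt h) x * (x - 0)^(2*2)))"
    using integrable_normal_moment[OF sq, of 0 "2*2"]
    by (intro nn_integral_eq_integral) (auto simp: zero_le_mult_iff)
  also have "\<dots> = ennreal (fact (2*2) / ((2 / (sqrt h)\<^sup>2)^2 * fact 2))"
    using integral_normal_moment_even[OF sq, of 0 2] by simp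
  also have "fact (2*2) / ((2 / (sqrt h)\<^sup>2)^2 * fact 2) = 3 * h^2"
    using h by (simp add: fact_numeral power2_eq_square field_simps)
  finally show ?thesis by (simp add: h_def)
qed

lemma rho_integral_finite:
  assumes BL: "brownian_law W" and T: "T > 0"
  shows "(\<integral>\<^sup>+ w. rho T w \<partial>W) < \<infinity>"
proof -
  have sW: "sets W = sets (PiM UNIV (\<lambda>_::real. borel))" using BL by (simp add: brownian_law_def)
  interpret W: prob_space W using BL by (simp add: brownian_law_def)
  have mW[measurable]: "rho T \<in> borel_measurable W" "\<And>n. bE T n \<in> borel_measurable W"
      "\<And>n j. (\<lambda>w. inc T n j w) \<in> borel_measurable W" "(\<lambda>w. w 0) \<in> borel_measurable W"
    by (simp_all add: measurable_cong_sets[OF sW refl])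
  have AE0: "AE w in W. w 0 = 0" using BL by (simp add: brownian_law_def)
  define a where "a n = rr^n + 3 * T^2 * (125/128)^n" for n
  have bEint: "(\<integral>\<^sup>+ w. bE T n w \<partial>W) = ennreal (a n)" for n
  proof -
    have "(\<integral>\<^sup>+ w. bE T n w \<partial>W) = ennreal (rr^n) +
         (\<Sum>j<2^n. \<integral>\<^sup>+ w. ennreal (inc T n j w ^ 4) \<partial>W) * ennreal (1 / rr^(3*n))"
      unfolding bE_def
      by (simp add: nn_integral_add nn_integral_multc nn_integral_sum W.emeasure_space_1 del: sum_ennreal)
    also have "\<dots> = ennreal (rr^n) + (\<Sum>j<(2::nat)^n. ennreal (3 * (T/2^n)^2)) * ennreal (1 / rr^(3*n))"
      by (simp add: inc4[OF BL T])
    also have "(\<Sum>j<(2::nat)^n. ennreal (3 * (T/2^n)^2)) * ennreal (1 / rr^(3*n))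
          = ennreal (2^n * (3 * (T/2^n)^2) * (1 / rr^(3*n)))"
      using rr_pos by (simp add: ennreal_of_nat_eq_real_of_nat ennreal_mult[symmetric])
    also have "ennreal (rr^n) + \<dots> = ennreal (rr^n + 2^n * (3 * (T/2^n)^2) * (1 / rr^(3*n)))"
      using rr_pos by (intro ennreal_plus[symmetric]) auto
    also have "2^n * (3 * (T/2^n)^2) * (1 / rr^(3*n)) = 3 * T^2 * (125/128)^n"
      using aux_pow[of n] by (simp add: rr_def power_mult power_divide field_simps)
    finally show ?thesis by (simp add: a_def)
  qed
  have suma: "summable a" unfolding a_def
    by (intro summable_add summable_mult summable_geometric) (auto simp: rr_def)
  have apos: "\<And>n. 0 \<le> a n" using rr_pos by (simp add: a_def)
  have "(\<integral>\<^sup>+ w. rho T w \<partial>W) = (\<integral>\<^sup>+ w. ennreal \<bar>w 0\<bar> \<partial>W) + (\<Sum>n. \<integral>\<^sup>+ w. bE T n w \<partial>W)"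
    unfolding rho_def by (simp add: nn_integral_add nn_integral_suminf)
  also have "(\<integral>\<^sup>+ w. ennreal \<bar>w 0\<bar> \<partial>W) = 0"
    using AE0 by (simp add: nn_integral_0_iff_AE)
  also have "(\<Sum>n. \<integral>\<^sup>+ w. bE T n w \<partial>W) = (\<Sum>n. ennreal (a n))" by (simp add: bEint)
  finally have eq: "(\<integral>\<^sup>+ w. rho T w \<partial>W) = 0 + (\<Sum>n. ennreal (a n))" .
  have "(\<Sum>n. ennreal (a n)) \<noteq> \<top>" using suma apos by (rule ennreal_suminf_neq_top)
  then show ?thesis using eq by (simp add: top.not_eq_extremum)
qed



abbreviation SS :: "(real \<times> (real \<Rightarrow> real)) measure" where
  "SS \<equiv> borel \<Otimes>\<^sub>M PiM UNIV (\<lambda>_::real. borel)"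

definition Near :: "real \<Rightarrow> real \<Rightarrow> real \<Rightarrow> (real \<times> (real\<Rightarrow>real)) set" where
  "Near T R y = {(x,w). ennreal \<bar>y - x\<bar> \<le> rho T w \<and> \<bar>y - x\<bar> \<le> R}"
definition Far :: "real \<Rightarrow> real \<Rightarrow> real \<Rightarrow> (real \<times> (real\<Rightarrow>real)) set" where
  "Far T R y = {(x,w). ennreal \<bar>y - x\<bar> \<le> rho T w \<and> R < \<bar>y - x\<bar>}"

lemma space_SS: "space SS = UNIV"
  by (simp add: space_pair_measure space_PiM)

lemma Near_sets: "Near T R y \<in> sets SS"
proof -
  have "Near T R y = {p \<in> space SS. ennreal \<bar>y - fst p\<bar> \<le> rho T (snd p) \<and> \<bar>y - fst p\<bar> \<le> R}"
    by (auto simp: Near_def space_SS)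
  also have "\<dots> \<in> sets SS" by measurable
  finally show ?thesis .
qed

lemma Far_sets: "Far T R y \<in> sets SS"
proof -
  have "Far T R y = {p \<in> space SS. ennreal \<bar>y - fst p\<bar> \<le> rho T (snd p) \<and> R < \<bar>y - fst p\<bar>}"
    by (auto simp: Far_def space_SS)
  also have "\<dots> \<in> sets SS" by measurable
  finally show ?thesis .
qed

lemma mu_bound:
  assumes BL: "brownian_law W" and A: "A \<in> sets SS"
    and g: "g \<in> borel_measurable (PiM UNIV (\<lambda>_::real. borel))"
    and sl: "\<And>w. emeasure lborel ((\<lambda>x. (x, w)) -` A) \<le> g w"
  shows "emeasure (density (lborel \<Otimes>\<^sub>M W) (\<lambda>_. ennreal lam)) A \<le> ennreal lam * (\<integral>\<^sup>+ w. g w \<partial>W)"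
proof -
  have sW: "sets W = sets (PiM UNIV (\<lambda>_::real. borel))" using BL by (simp add: brownian_law_def)
  interpret W: prob_space W using BL by (simp add: brownian_law_def)
  interpret P: pair_sigma_finite lborel W by unfold_locales
  have sP: "sets (lborel \<Otimes>\<^sub>M W) = sets SS"
    by (intro sets_pair_measure_cong) (simp_all add: sW)
  have A': "A \<in> sets (lborel \<Otimes>\<^sub>M W)" using A sP by simp
  have gW: "g \<in> borel_measurable W" using g by (simp add: measurable_cong_sets[OF sW refl])
  have "emeasure (density (lborel \<Otimes>\<^sub>M W) (\<lambda>_. ennreal lam)) A
      = (\<integral>\<^sup>+ p. ennreal lam * indicator A p \<partial>(lborel \<Otimes>\<^sub>M W))"
    using A' by (simp add: emeasure_density)
  also have "\<dots> = ennreal lam * emeasure (lborel \<Otimes>\<^sub>M W) A"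
    using A' by (simp add: nn_integral_cmult_indicator)
  also have "emeasure (lborel \<Otimes>\<^sub>M W) A = (\<integral>\<^sup>+ w. emeasure lborel ((\<lambda>x. (x, w)) -` A) \<partial>W)"
    using A' by (rule P.emeasure_pair_measure_alt2)
  also have "\<dots> \<le> (\<integral>\<^sup>+ w. g w \<partial>W)"
    by (intro nn_integral_mono sl)
  finally show ?thesis by (simp add: mult_left_mono)
qed

lemma slice_near:
  "emeasure lborel {x. ennreal \<bar>y - x\<bar> \<le> r \<and> \<bar>y - x\<bar> \<le> R} \<le> 2 * r"
proof (cases "r = \<top>")
  case True then show ?thesis by simp
next
  case False
  then obtain c where c: "r = ennreal c" "c \<ge> 0" by (cases r) auto
  have "{x. ennreal \<bar>y - x\<bar> \<le> r \<and> \<bar>y - x\<bar> \<le> R} \<subseteq> {y - c .. y + c}"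
    using c by (auto simp: ennreal_le_iff abs_le_iff)
  then have "emeasure lborel {x. ennreal \<bar>y - x\<bar> \<le> r \<and> \<bar>y - x\<bar> \<le> R} \<le> emeasure lborel {y - c .. y + c}"
    by (intro emeasure_mono) auto
  also have "\<dots> = ennreal (2 * c)" using c by simp
  also have "\<dots> = 2 * r" using c by (simp add: ennreal_mult)
  finally show ?thesis .
qed

lemma slice_far:
  assumes R: "R \<ge> 0"
  shows "emeasure lborel {x. ennreal \<bar>y - x\<bar> \<le> r \<and> R < \<bar>y - x\<bar>} \<le> 2 * (r - ennreal R)"
proof (cases "r = \<top>")
  case True then show ?thesis by simp
next
  case False
  then obtain c where c: "r = ennreal c" "c \<ge> 0" by (cases r) auto
  have "{x. ennreal \<bar>y - x\<bar> \<le> r \<and> R < \<bar>y - x\<bar>} \<subseteq> {y - c .. y - R} \<union> {y + R .. y + c}"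
    using c by (auto simp: ennreal_le_iff abs_le_iff)
  then have "emeasure lborel {x. ennreal \<bar>y - x\<bar> \<le> r \<and> R < \<bar>y - x\<bar>}
      \<le> emeasure lborel ({y - c .. y - R} \<union> {y + R .. y + c})"
    by (intro emeasure_mono) auto
  also have "\<dots> \<le> emeasure lborel {y - c .. y - R} + emeasure lborel {y + R .. y + c}"
    by (intro emeasure_subadditive) auto
  also have "\<dots> = ennreal (if c \<ge> R then c - R else 0) + ennreal (if c \<ge> R then c - R else 0)"
    by (simp add: emeasure_lborel_Icc_eq)
  also have "\<dots> = 2 * (r - ennreal R)"
    using c R by (auto simp: ennreal_minus mult_2 ennreal_minus_if)
  finally show ?thesis .
qed

lemma mu_Near:
  assumes BL: "brownian_law W"
  shows "emeasure (density (lborel \<Otimes>\<^sub>M W) (\<lambda>_. ennreal lam)) (Near T R y)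
     \<le> ennreal lam * (\<integral>\<^sup>+ w. 2 * rho T w \<partial>W)"
  by (rule mu_bound[OF BL Near_sets]) (auto simp: Near_def intro: order_trans[OF _ slice_near])

lemma mu_Far:
  assumes BL: "brownian_law W" and R: "R \<ge> 0"
  shows "emeasure (density (lborel \<Otimes>\<^sub>M W) (\<lambda>_. ennreal lam)) (Far T R y)
     \<le> ennreal lam * (\<integral>\<^sup>+ w. 2 * (rho T w - ennreal R) \<partial>W)"
  by (rule mu_bound[OF BL Far_sets]) (auto simp: Far_def intro: order_trans[OF _ slice_far[OF R]])



lemma no_cluster:
  fixes A :: "real set"
  assumes up: "\<And>N::nat. \<exists>y. real N \<le> y \<and> y \<notin> A"
      and dn: "\<And>N::nat. \<exists>y. real N \<le> - y \<and> y \<notin> A"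
  shows "\<not> has_unbounded_cluster A"
proof
  assume "has_unbounded_cluster A"
  then obtain z where z: "z \<in> A" and ub: "\<not> bounded (path_component_set A z)"
    unfolding has_unbounded_cluster_def by blast
  define C where "C = path_component_set A z"
  obtain N :: nat where N: "\<bar>z\<bar> < real N" using reals_Archimedean2 by blast
  obtain b where b: "real N \<le> b" "b \<notin> A" using up by blast
  obtain a where a: "real N \<le> - a" "a \<notin> A" using dn by blast
  have CA: "C \<subseteq> A" unfolding C_def by (rule path_component_subset)
  have zC: "z \<in> C" unfolding C_def using z by (simp add: path_component_refl)
  have conn: "connected C" unfolding C_def by (simp add: path_connected_path_component path_connected_imp_connected)
  have "C \<subseteq> {a..b}"
  proof
    fix u assume u: "u \<in> C"
    show "u \<in> {a..b}"
    proof (rule ccontr)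
      assume "u \<notin> {a..b}"
      then have "u < a \<or> b < u" by auto
      then show False
      proof
        assume "u < a"
        then have "a \<in> C" using conn u zC N a unfolding connected_iff_interval
          by (metis abs_le_D2 le_less_trans less_imp_le linorder_not_le minus_le_iff)
        then show False using CA a by auto
      next
        assume "b < u"
        then have "b \<in> C" using conn u zC N b unfolding connected_iff_interval
          by (metis abs_ge_self le_less_trans less_imp_le linorder_not_le)
        then show False using CA b by auto
      qed
    qed
  qed
  then have "bounded C" by (rule bounded_subset[OF bounded_closed_interval])
  then show False using ub C_def by simp
qed

lemma AE_from_eps:
  assumes P: "prob_space M"
    and H: "\<And>e. e > 0 \<Longrightarrow> \<exists>B\<in>sets M. measure M B \<le> e \<and> (AE \<omega> in M. \<omega> \<notin> B \<longrightarrow> Q \<omega>)"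
  shows "AE \<omega> in M. Q \<omega>"
proof -
  interpret prob_space M by (fact P)
  have "\<forall>m::nat. \<exists>B\<in>sets M. measure M B \<le> inverse (real (Suc m)) \<and> (AE \<omega> in M. \<omega> \<notin> B \<longrightarrow> Q \<omega>)"
    using H by simp
  then obtain Bf where Bf: "\<And>m. Bf m \<in> sets M" "\<And>m. measure M (Bf m) \<le> inverse (real (Suc m))"
      "\<And>m. AE \<omega> in M. \<omega> \<notin> Bf m \<longrightarrow> Q \<omega>" by metis
  define C where "C = (\<Inter>m. Bf m)"
  have Cs: "C \<in> sets M" unfolding C_def using Bf(1) by auto
  have "measure M C \<le> inverse (real (Suc m))" for m
  proof -
    have "C \<subseteq> Bf m" unfolding C_def by auto
    then have "measure M C \<le> measure M (Bf m)" using Bf(1) by (rule finite_measure_mono)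
    then show ?thesis using Bf(2)[of m] by linarith
  qed
  then have "measure M C \<le> 0"
    by (intro LIMSEQ_le_const[OF LIMSEQ_inverse_real_of_nat]) auto
  then have "measure M C = 0" by (simp add: measure_le_0_iff)
  then have "C \<in> null_sets M" using Cs by (simp add: emeasure_eq_measure null_sets_def)
  then have "AE \<omega> in M. \<omega> \<notin> C" by (rule AE_not_in)
  moreover have "AE \<omega> in M. \<forall>m. \<omega> \<notin> Bf m \<longrightarrow> Q \<omega>" unfolding AE_all_countable using Bf(3) by blast
  ultimately show ?thesis by eventually_elim (auto simp: C_def)
qed

context
  fixes lam :: real and M :: "'w measure" and W :: "(real \<Rightarrow> real) measure"
    and \<Phi> :: "'w \<Rightarrow> (real \<times> (real \<Rightarrow> real)) set" and t :: real
  assumes lam: "lam > 0" and BL: "brownian_law W"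
    and PPP: "poisson_point_process M SS (density (lborel \<Otimes>\<^sub>M W) (\<lambda>_. ennreal lam)) \<Phi>"
    and t: "t \<ge> 0"
begin

lemma uncovered:
  assumes c: "\<forall>(x,w)\<in>P. continuous_on {0..} w"
    and n: "P \<inter> Near (t+1) R y = {}" and f: "P \<inter> Far (t+1) R y = {}"
  shows "y \<notin> occupied P t"
proof
  assume "y \<in> occupied P t"
  then obtain x w s where xw: "(x,w) \<in> P" and s: "s \<in> {0..t}" and y: "y = x + w s"
    unfolding occupied_def by auto
  have "continuous_on {0..t+1} w" using c xw by (auto intro: continuous_on_subset)
  then have "ennreal \<bar>w s\<bar> \<le> rho (t+1) w" using s t by (intro rho_bound) auto
  then have "ennreal \<bar>y - x\<bar> \<le> rho (t+1) w" using y by simp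
  then have "(x,w) \<in> Near (t+1) R y \<or> (x,w) \<in> Far (t+1) R y"
    by (auto simp: Near_def Far_def)
  then show False using n f xw by auto
qed

lemma PPP_facts:
  assumes A: "A \<in> sets SS" and fin: "emeasure (density (lborel \<Otimes>\<^sub>M W) (\<lambda>_. ennreal lam)) A < \<infinity>"
  shows "AE \<omega> in M. finite (\<Phi> \<omega> \<inter> A)"
    and "(\<lambda>\<omega>. card (\<Phi> \<omega> \<inter> A)) -` {m. m \<noteq> 0} \<inter> space M \<in> sets M"
    and "measure M ((\<lambda>\<omega>. card (\<Phi> \<omega> \<inter> A)) -` {m. m \<noteq> 0} \<inter> space M)
           = 1 - exp (- measure (density (lborel \<Otimes>\<^sub>M W) (\<lambda>_. ennreal lam)) A)"
proof -
  let ?\<mu> = "density (lborel \<Otimes>\<^sub>M W) (\<lambda>_. ennreal lam)"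
  let ?f = "\<lambda>\<omega>. card (\<Phi> \<omega> \<inter> A)"
  have P: "prob_space M" using PPP by (simp add: poisson_point_process_def)
  interpret prob_space M by (fact P)
  have H: "(AE \<omega> in M. finite (\<Phi> \<omega> \<inter> A)) \<and> ?f \<in> measurable M (count_space UNIV) \<and>
        (\<forall>k::nat. measure M {\<omega>\<in>space M. ?f \<omega> = k} = measure ?\<mu> A ^ k / fact k * exp (- measure ?\<mu> A))"
    using PPP A fin unfolding poisson_point_process_def by blast
  then show "AE \<omega> in M. finite (\<Phi> \<omega> \<inter> A)" by blast
  have m: "?f \<in> measurable M (count_space UNIV)" using H by blast
  show S1: "?f -` {m. m \<noteq> 0} \<inter> space M \<in> sets M" by (rule measurable_sets[OF m]) auto
  have S0: "?f -` {0} \<inter> space M \<in> sets M" by (rule measurable_sets[OF m]) auto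
  have "measure M {\<omega>\<in>space M. ?f \<omega> = 0} = exp (- measure ?\<mu> A)" using H by simp
  moreover have "{\<omega>\<in>space M. ?f \<omega> = 0} = ?f -` {0} \<inter> space M" by auto
  moreover have "?f -` {m. m \<noteq> 0} \<inter> space M = space M - (?f -` {0} \<inter> space M)" by auto
  ultimately show "measure M (?f -` {m. m \<noteq> 0} \<inter> space M) = 1 - exp (- measure ?\<mu> A)"
    using prob_compl[OF S0] by simp
qed

end



context
  fixes lam :: real and M :: "'w measure" and W :: "(real \<Rightarrow> real) measure"
    and \<Phi> :: "'w \<Rightarrow> (real \<times> (real \<Rightarrow> real)) set" and t :: real
  assumes lam: "lam > 0" and BL: "brownian_law W"
    and PPP: "poisson_point_process M SS (density (lborel \<Otimes>\<^sub>M W) (\<lambda>_. ennreal lam)) \<Phi>"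
    and t: "t \<ge> 0"
begin

lemma far_small:
  assumes T: "T > 0" and eta: "\<eta> > 0"
  shows "\<exists>Ri::nat. ennreal lam * (\<integral>\<^sup>+ w. 2 * (rho T w - ennreal (real Ri)) \<partial>W) < ennreal \<eta>"
proof -
  have sW: "sets W = sets (PiM UNIV (\<lambda>_::real. borel))" using BL by (simp add: brownian_law_def)
  interpret W: prob_space W using BL by (simp add: brownian_law_def)
  have [measurable]: "rho T \<in> borel_measurable W"
    by (simp add: measurable_cong_sets[OF sW refl])
  define f where "f i w = 2 * (rho T w - ennreal (real i))" for i w
  have fm[measurable]: "f i \<in> borel_measurable W" for i unfolding f_def by measurable
  have fin: "(\<integral>\<^sup>+ w. rho T w \<partial>W) < \<infinity>" by (rule rho_integral_finite[OF BL T])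
  have f0: "(\<integral>\<^sup>+ w. f 0 w \<partial>W) < \<infinity>"
    using fin by (simp add: f_def nn_integral_cmult ennreal_mult_less_top)
  have dec: "AE w in W. f (Suc i) w \<le> f i w" for i
    unfolding f_def by (intro AE_I2 mult_left_mono ennreal_minus_mono) auto
  have AEf: "AE w in W. rho T w \<noteq> \<top>"
    using nn_integral_PInf_AE[of "rho T" W] fin by auto
  have "(\<integral>\<^sup>+ w. (INF i. f i w) \<partial>W) = 0"
  proof -
    have "AE w in W. (INF i. f i w) = 0"
      using AEf
    proof eventually_elim
      case (elim w)
      then obtain c where c: "rho T w = ennreal c" "c \<ge> 0" by (cases "rho T w") auto
      have cc: "c \<le> real (nat \<lceil>c\<rceil>)" by (rule real_nat_ceiling_ge)
      have "f (nat \<lceil>c\<rceil>) w = 0"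
        unfolding f_def c(1) using cc by (simp add: ennreal_minus ennreal_neg)
      then have "(INF i. f i w) \<le> 0" by (metis INF_lower2 UNIV_I order_refl)
      then show ?case by simp
    qed
    then show ?thesis by (simp add: nn_integral_cong_AE)
  qed
  moreover have "(\<integral>\<^sup>+ w. (INF i. f i w) \<partial>W) = (INF i. \<integral>\<^sup>+ w. f i w \<partial>W)"
    by (rule nn_integral_monotone_convergence_INF_AE[OF dec fm f0])
  ultimately have "(INF i. \<integral>\<^sup>+ w. f i w \<partial>W) < ennreal (\<eta> / lam)"
    using eta lam by simp
  then obtain i where i: "(\<integral>\<^sup>+ w. f i w \<partial>W) < ennreal (\<eta> / lam)"
    by (auto simp: INF_less_iff)
  have "ennreal lam * (\<integral>\<^sup>+ w. f i w \<partial>W) < ennreal lam * ennreal (\<eta> / lam)"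
    using lam by (intro ennreal_mult_strict_left_mono i) auto
  also have "\<dots> = ennreal \<eta>" using lam eta by (simp add: ennreal_mult[symmetric])
  finally show ?thesis unfolding f_def by blast
qed

lemma gap:
  assumes CONT: "AE \<omega> in M. \<forall>(x, w)\<in>\<Phi> \<omega>. continuous_on {0..} w"
    and sg: "\<sigma> = 1 \<or> \<sigma> = -1" and e: "\<epsilon> > 0"
  shows "\<exists>B\<in>sets M. measure M B \<le> \<epsilon> \<and>
           (AE \<omega> in M. \<omega> \<notin> B \<longrightarrow> (\<exists>y. real N \<le> \<sigma> * y \<and> y \<notin> occupied (\<Phi> \<omega>) t))"
proof -
  let ?\<mu> = "density (lborel \<Otimes>\<^sub>M W) (\<lambda>_. ennreal lam)"
  have P: "prob_space M" using PPP by (simp add: poisson_point_process_def)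
  interpret prob_space M by (fact P)
  have sW: "sets W = sets (PiM UNIV (\<lambda>_::real. borel))" using BL by (simp add: brownian_law_def)
  have T: "t + 1 > 0" using t by simp
  have [measurable]: "rho (t+1) \<in> borel_measurable W"
    by (simp add: measurable_cong_sets[OF sW refl])
  have fin: "(\<integral>\<^sup>+ w. rho (t+1) w \<partial>W) < \<infinity>" by (rule rho_integral_finite[OF BL T])
  define cE where "cE = ennreal lam * (\<integral>\<^sup>+ w. 2 * rho (t+1) w \<partial>W)"
  have cEfin: "cE < \<infinity>"
    using fin by (simp add: cE_def nn_integral_cmult ennreal_mult_less_top)
  define c where "c = enn2real cE"
  have c0: "c \<ge> 0" by (simp add: c_def)
  define q where "q = 1 - exp (- c)"
  have q0: "0 \<le> q" and q1: "q < 1" using c0 by (auto simp: q_def)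
  have "\<epsilon>/2 > 0" using e by simp
  then obtain n0 where n0: "q ^ n0 < \<epsilon>/2" using real_arch_pow_inv q1 by blast
  define n where "n = Suc n0"
  have qn: "q ^ n < \<epsilon>/2"
    using power_decreasing[of n0 n q] q0 q1 n0 by (simp add: n_def)
  define \<eta> where "\<eta> = \<epsilon> / (2 * real n)"
  have eta: "\<eta> > 0" using e by (simp add: \<eta>_def n_def)
  obtain Ri :: nat where Ri: "ennreal lam * (\<integral>\<^sup>+ w. 2 * (rho (t+1) w - ennreal (real Ri)) \<partial>W) < ennreal \<eta>"
    using far_small[OF T eta] by blast
  define R where "R = real Ri"
  have R0: "R \<ge> 0" by (simp add: R_def)
  define y where "y k = \<sigma> * (real N + (2*R+1) * real k)" for k
  define Ne where "Ne k = Near (t+1) R (y k)" for k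
  define Fa where "Fa k = Far (t+1) R (y k)" for k
  have Ne_sets: "Ne k \<in> sets SS" for k unfolding Ne_def by (rule Near_sets)
  have Fa_sets: "Fa k \<in> sets SS" for k unfolding Fa_def by (rule Far_sets)
  have Ne_mu: "emeasure ?\<mu> (Ne k) \<le> cE" for k
    unfolding Ne_def cE_def by (rule mu_Near[OF BL])
  have Fa_mu: "emeasure ?\<mu> (Fa k) < ennreal \<eta>" for k
    using mu_Far[OF BL R0, of lam "t+1" "y k"] Ri unfolding Fa_def R_def by simp
  have Ne_fin: "emeasure ?\<mu> (Ne k) < \<infinity>" for k using Ne_mu[of k] cEfin by simp
  have Fa_fin: "emeasure ?\<mu> (Fa k) < \<infinity>" for k using Fa_mu[of k] by (simp add: order_less_trans)
  have Ne_meas: "measure ?\<mu> (Ne k) \<le> c" for k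
    unfolding measure_def c_def using Ne_mu[of k] cEfin by (intro enn2real_mono) auto
  have Fa_meas: "measure ?\<mu> (Fa k) < \<eta>" for k
  proof -
    have "emeasure ?\<mu> (Fa k) = ennreal (measure ?\<mu> (Fa k))"
      using Fa_fin[of k] by (intro emeasure_eq_ennreal_measure) auto
    then show ?thesis using Fa_mu[of k] eta by (simp add: ennreal_less_iff)
  qed
  define X where "X k \<omega> = card (\<Phi> \<omega> \<inter> Ne k)" for k \<omega>
  define Z where "Z k \<omega> = card (\<Phi> \<omega> \<inter> Fa k)" for k \<omega>
  define E1 where "E1 k = X k -` {m. m \<noteq> 0} \<inter> space M" for k
  define E2 where "E2 k = Z k -` {m. m \<noteq> 0} \<inter> space M" for k
  have E1s: "E1 k \<in> sets M" for k
    using PPP_facts(2)[OF lam BL PPP t Ne_sets Ne_fin] unfolding E1_def X_def .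
  have E2s: "E2 k \<in> sets M" for k
    using PPP_facts(2)[OF lam BL PPP t Fa_sets Fa_fin] unfolding E2_def Z_def .
  have E1p: "prob (E1 k) \<le> q" for k
  proof -
    have "prob (E1 k) = 1 - exp (- measure ?\<mu> (Ne k))"
      using PPP_facts(3)[OF lam BL PPP t Ne_sets Ne_fin] unfolding E1_def X_def .
    also have "\<dots> \<le> q" unfolding q_def using Ne_meas[of k] by simp
    finally show ?thesis .
  qed
  have E2p: "prob (E2 k) \<le> \<eta>" for k
  proof -
    have "prob (E2 k) = 1 - exp (- measure ?\<mu> (Fa k))"
      using PPP_facts(3)[OF lam BL PPP t Fa_sets Fa_fin] unfolding E2_def Z_def .
    also have "\<dots> \<le> measure ?\<mu> (Fa k)" using exp_ge_add_one_self[of "- measure ?\<mu> (Fa k)"] by simp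
    finally show ?thesis using Fa_meas[of k] by simp
  qed
  have disj: "disjoint_family_on Ne {..<n}"
    unfolding disjoint_family_on_def
  proof (intro ballI impI)
    fix i j assume ij: "i \<in> {..<n}" "j \<in> {..<n}" "i \<noteq> j"
    have s1: "\<bar>\<sigma>\<bar> = 1" using sg by auto
    have "y i - y j = \<sigma> * ((2*R+1) * (real i - real j))" by (simp add: y_def algebra_simps)
    then have d: "\<bar>y i - y j\<bar> = (2*R+1) * \<bar>real i - real j\<bar>"
      using s1 R0 by (simp add: abs_mult)
    have "i + 1 \<le> j \<or> j + 1 \<le> i" using ij by arith
    then have "real (i + 1) \<le> real j \<or> real (j + 1) \<le> real i" by (simp only: of_nat_le_iff)
    then have "1 \<le> \<bar>real i - real j\<bar>" by auto
    then have "(2*R+1) * 1 \<le> (2*R+1) * \<bar>real i - real j\<bar>" using R0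
      by (intro mult_left_mono) auto
    then have yy: "2*R+1 \<le> \<bar>y i - y j\<bar>" unfolding d by simp
    show "Ne i \<inter> Ne j = {}"
    proof (rule ccontr)
      assume "Ne i \<inter> Ne j \<noteq> {}"
      then obtain x w where "\<bar>y i - x\<bar> \<le> R" "\<bar>y j - x\<bar> \<le> R"
        unfolding Ne_def Near_def by auto
      then have "\<bar>y i - y j\<bar> \<le> 2*R" by arith
      then show False using yy by linarith
    qed
  qed
  have indep: "indep_vars (\<lambda>_. count_space UNIV) X {..<n}"
  proof -
    have "\<forall>(I::nat set) A. finite I \<longrightarrow> A ` I \<subseteq> sets SS \<longrightarrow>
        (\<forall>i\<in>I. emeasure ?\<mu> (A i) < \<infinity>) \<longrightarrow> disjoint_family_on A I \<longrightarrow>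
        indep_vars (\<lambda>_. count_space UNIV) (\<lambda>i \<omega>. card (\<Phi> \<omega> \<inter> A i)) I"
      using PPP unfolding poisson_point_process_def by blast
    then show ?thesis using Ne_sets Ne_fin disj unfolding X_def by blast
  qed
  define B1 where "B1 = (\<Inter>k\<in>{..<n}. E1 k)"
  have B1p: "prob B1 = (\<Prod>k\<in>{..<n}. prob (E1 k))"
    unfolding B1_def E1_def by (rule indep_varsD[OF indep]) (auto simp: n_def)
  also have "\<dots> \<le> (\<Prod>k\<in>{..<n}. q)"
    by (intro prod_mono) (auto intro: E1p)
  also have "\<dots> = q ^ n" by simp
  finally have B1le: "prob B1 \<le> q ^ n" .
  have B1s: "B1 \<in> sets M" unfolding B1_def using E1s by (auto simp: n_def)
  define B2 where "B2 = (\<Union>k\<in>{..<n}. E2 k)"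
  have B2s: "B2 \<in> sets M" unfolding B2_def using E2s by auto
  have "prob B2 \<le> (\<Sum>k\<in>{..<n}. prob (E2 k))"
    unfolding B2_def by (rule finite_measure_subadditive_finite) (auto intro: E2s)
  also have "\<dots> \<le> (\<Sum>k\<in>{..<n}. \<eta>)" by (intro sum_mono E2p)
  also have "\<dots> = \<epsilon>/2" unfolding \<eta>_def n_def by (simp add: field_simps)
  finally have B2le: "prob B2 \<le> \<epsilon>/2" .
  define B where "B = B1 \<union> B2"
  have Bs: "B \<in> sets M" using B1s B2s by (simp add: B_def)
  have "prob B \<le> prob B1 + prob B2" unfolding B_def by (rule measure_Un_le[OF B1s B2s])
  then have Ble: "prob B \<le> \<epsilon>" using B1le B2le qn by simp
  have AEs: "AE \<omega> in M. (\<forall>(x, w)\<in>\<Phi> \<omega>. continuous_on {0..} w) \<and> (\<forall>k\<in>{..<n}. finite (\<Phi> \<omega> \<inter> Ne k))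
       \<and> (\<forall>k\<in>{..<n}. finite (\<Phi> \<omega> \<inter> Fa k)) \<and> \<omega> \<in> space M"
  proof -
    have a1: "AE \<omega> in M. \<forall>k\<in>{..<n}. finite (\<Phi> \<omega> \<inter> Ne k)"
      by (rule AE_finite_allI) (auto intro: PPP_facts(1)[OF lam BL PPP t Ne_sets Ne_fin])
    have a2: "AE \<omega> in M. \<forall>k\<in>{..<n}. finite (\<Phi> \<omega> \<inter> Fa k)"
      by (rule AE_finite_allI) (auto intro: PPP_facts(1)[OF lam BL PPP t Fa_sets Fa_fin])
    show ?thesis using CONT a1 a2 AE_space by eventually_elim auto
  qed
  have "AE \<omega> in M. \<omega> \<notin> B \<longrightarrow> (\<exists>y. real N \<le> \<sigma> * y \<and> y \<notin> occupied (\<Phi> \<omega>) t)"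
    using AEs
  proof eventually_elim
    case (elim \<omega>)
    show ?case
    proof
      assume nB: "\<omega> \<notin> B"
      then have "\<omega> \<notin> B1" by (simp add: B_def)
      then obtain k where k: "k < n" "\<omega> \<notin> E1 k" unfolding B1_def by auto
      then have "X k \<omega> = 0" using elim by (simp add: E1_def)
      then have n1: "\<Phi> \<omega> \<inter> Near (t+1) R (y k) = {}"
        using elim k by (simp add: X_def Ne_def)
      have "\<omega> \<notin> E2 k" using nB k by (auto simp: B_def B2_def)
      then have "Z k \<omega> = 0" using elim by (simp add: E2_def)
      then have n2: "\<Phi> \<omega> \<inter> Far (t+1) R (y k) = {}"
        using elim k by (simp add: Z_def Fa_def)
      have "y k \<notin> occupied (\<Phi> \<omega>) t"
        by (rule uncovered[OF lam BL PPP t _ n1 n2]) (use elim in blast)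
      moreover have "real N \<le> \<sigma> * y k"
      proof -
        have "\<sigma> * \<sigma> = 1" using sg by auto
        then have "\<sigma> * y k = real N + (2*R+1) * real k" by (simp add: y_def mult.assoc[symmetric])
        then show ?thesis using R0 by simp
      qed
      ultimately show "\<exists>y. real N \<le> \<sigma> * y \<and> y \<notin> occupied (\<Phi> \<omega>) t" by blast
    qed
  qed
  then show ?thesis using Bs Ble by blast
qed

end

theorem theorem1p1:
  fixes lam :: real
    and M :: "'w measure"
    and W :: "(real \<Rightarrow> real) measure"
    and \<Phi> :: "'w \<Rightarrow> (real \<times> (real \<Rightarrow> real)) set"
  assumes "lam > 0"
    and "brownian_law W"
    and "poisson_point_process M (borel \<Otimes>\<^sub>M PiM UNIV (\<lambda>_::real. borel))
           (density (lborel \<Otimes>\<^sub>M W) (\<lambda>_. ennreal lam)) \<Phi>"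
    and "AE \<omega> in M. \<forall>(x, w)\<in>\<Phi> \<omega>. continuous_on {0..} w"
  shows "\<forall>t\<ge>0. AE \<omega> in M. \<not> has_unbounded_cluster (occupied (\<Phi> \<omega>) t)"
proof (intro allI impI)
  fix t :: real assume t: "t \<ge> 0"
  have P: "prob_space M" using assms(3) by (simp add: poisson_point_process_def)
  have up: "AE \<omega> in M. \<forall>N::nat. \<exists>y. real N \<le> y \<and> y \<notin> occupied (\<Phi> \<omega>) t"
    unfolding AE_all_countable
  proof
    fix N :: nat
    show "AE \<omega> in M. \<exists>y. real N \<le> y \<and> y \<notin> occupied (\<Phi> \<omega>) t"
      by (rule AE_from_eps[OF P]) (use gap[OF assms(1,2,3) t assms(4), of 1 _ N] in simp)
  qed
  have dn: "AE \<omega> in M. \<forall>N::nat. \<exists>y. real N \<le> - y \<and> y \<notin> occupied (\<Phi> \<omega>) t"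
    unfolding AE_all_countable
  proof
    fix N :: nat
    show "AE \<omega> in M. \<exists>y. real N \<le> - y \<and> y \<notin> occupied (\<Phi> \<omega>) t"
      by (rule AE_from_eps[OF P]) (use gap[OF assms(1,2,3) t assms(4), of "-1" _ N] in simp)
  qed
  from up dn show "AE \<omega> in M. \<not> has_unbounded_cluster (occupied (\<Phi> \<omega>) t)"
    by eventually_elim (intro no_cluster, blast+)
qed


end
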